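(* For every integer $k\ge 2$ there exists a latin square of order $2k$ which contains two disjoint indivisible $k$-plexes.
   Context: A latin square of order $n$ is an $n\times n$ array of $n$ symbols in which each symbol occurs exactly once in each row and column. A $k$-plex in a latin square of order $n$ is a set of $kn$ cells containing exactly $k$ cells from each row, exactly $k$ cells from each column, and exactly $k$ occurrences of each symbol. A $k$-plex is indivisible if it contains no $c$-plex (of the same latin square) for any $c$ with $0<c<k$. *)

theory Defs
  imports Main
begin

definition latin_square :: "nat \<Rightarrow> (nat \<Rightarrow> nat \<Rightarrow> nat) \<Rightarrow> bool" where
  "latin_square n L \<longleftrightarrow>
     (\<forall>i<n. \<forall>j<n. L i j < n) \<and>
     (\<forall>i<n. \<forall>s<n. \<exists>!j. j < n \<and> L i j = s) \<and>
     (\<forall>j<n. \<forall>s<n. \<exists>!i. i < n \<and> L i j = s)"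

definition is_plex :: "nat \<Rightarrow> (nat \<Rightarrow> nat \<Rightarrow> nat) \<Rightarrow> nat \<Rightarrow> (nat \<times> nat) set \<Rightarrow> bool" where
  "is_plex n L k P \<longleftrightarrow>
     P \<subseteq> {0..<n} \<times> {0..<n} \<and>
     card P = k * n \<and>
     (\<forall>i<n. card {j. (i, j) \<in> P} = k) \<and>
     (\<forall>j<n. card {i. (i, j) \<in> P} = k) \<and>
     (\<forall>s<n. card {(i, j). (i, j) \<in> P \<and> L i j = s} = k)"

definition indivisible_plex :: "nat \<Rightarrow> (nat \<Rightarrow> nat \<Rightarrow> nat) \<Rightarrow> nat \<Rightarrow> (nat \<times> nat) set \<Rightarrow> bool" where
  "indivisible_plex n L k P \<longleftrightarrow>
     is_plex n L k P \<and> (\<forall>c Q. 0 < c \<and> c < k \<and> Q \<subseteq> P \<longrightarrow> \<not> is_plex n L c Q)"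

end

theory Submission
  imports Defs
begin



lemma card_filter_sum:
  assumes "finite A"
  shows "card {x\<in>A. P x} = (\<Sum>x\<in>A. if P x then 1 else (0::nat))"
  using assms by (simp add: sum.inter_filter[symmetric])

lemma fiber_sum:
  fixes F :: "'b \<Rightarrow> 'c::comm_semiring_1" and G :: "'a \<Rightarrow> 'b"
  assumes fin: "finite R" "finite T" and img: "G ` R \<subseteq> T"
  shows "(\<Sum>p\<in>R. F (G p)) = (\<Sum>y\<in>T. F y * of_nat (card {p\<in>R. G p = y}))"
proof -
  have "(\<Sum>p\<in>R. F (G p)) = (\<Sum>y\<in>T. \<Sum>p\<in>{p\<in>R. G p = y}. F (G p))"
    using sum.group[OF fin img, of "\<lambda>p. F (G p)"] by simp
  also have "\<dots> = (\<Sum>y\<in>T. F y * of_nat (card {p\<in>R. G p = y}))"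
    by (rule sum.cong) (auto simp: mult.commute)
  finally show ?thesis .
qed

lemma card_row_fiber:
  "card {p\<in>R. fst p = i} = card {j. (i, j) \<in> R}"
proof -
  have "{p\<in>R. fst p = i} = Pair i ` {j. (i, j) \<in> R}" by force
  moreover have "inj_on (Pair i) {j. (i, j) \<in> R}" by (auto simp: inj_on_def)
  ultimately show ?thesis by (simp add: card_image)
qed

lemma card_col_fiber:
  "card {p\<in>R. snd p = j} = card {i. (i, j) \<in> R}"
proof -
  have "{p\<in>R. snd p = j} = (\<lambda>i. (i,j)) ` {i. (i, j) \<in> R}" by force
  moreover have "inj_on (\<lambda>i. (i,j)) {i. (i, j) \<in> R}" by (auto simp: inj_on_def)
  ultimately show ?thesis by (simp add: card_image)
qed

lemma card_sym_fiber:
  "card {p\<in>R. (\<lambda>p. L (fst p) (snd p)) p = s} = card {(i, j). (i, j) \<in> R \<and> L i j = s}"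
  by (rule arg_cong[where f=card]) auto

lemma latin_range:
  assumes "latin_square n L" "i < n" "j < n" shows "L i j < n"
proof -
  have "\<forall>i<n. \<forall>j<n. L i j < n" using assms(1) unfolding latin_square_def by (rule conjunct1)
  then show ?thesis using assms(2,3) by blast
qed

lemma cert_sum:
  fixes f g h :: "nat \<Rightarrow> int"
  assumes lat: "latin_square n L" and pl: "is_plex n L c R"
  shows "(\<Sum>p\<in>R. f (fst p) + g (snd p) + h (L (fst p) (snd p)))
          = int c * ((\<Sum>i<n. f i) + (\<Sum>j<n. g j) + (\<Sum>s<n. h s))"
proof -
  have sub: "R \<subseteq> {0..<n} \<times> {0..<n}" using pl unfolding is_plex_def by blast
  have finR: "finite R" using sub finite_subset by blast
  have rows: "\<forall>i<n. card {j. (i, j) \<in> R} = c" using pl unfolding is_plex_def by blast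
  have cols: "\<forall>j<n. card {i. (i, j) \<in> R} = c" using pl unfolding is_plex_def by blast
  have syms: "\<forall>s<n. card {(i, j). (i, j) \<in> R \<and> L i j = s} = c" using pl unfolding is_plex_def by blast
  have i1: "fst ` R \<subseteq> {..<n}" using sub by auto
  have i2: "snd ` R \<subseteq> {..<n}" using sub by auto
  have i3: "(\<lambda>p. L (fst p) (snd p)) ` R \<subseteq> {..<n}" using sub latin_range[OF lat] by fastforce
  have s1: "(\<Sum>p\<in>R. f (fst p)) = int c * (\<Sum>i<n. f i)"
  proof -
    have "(\<Sum>p\<in>R. f (fst p)) = (\<Sum>y<n. f y * int (card {p\<in>R. fst p = y}))"
      using fiber_sum[OF finR _ i1, of f] by simp
    also have "\<dots> = (\<Sum>y<n. f y * int c)"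
      by (rule sum.cong) (simp_all add: card_row_fiber rows)
    also have "\<dots> = int c * (\<Sum>i<n. f i)" by (simp add: sum_distrib_left mult.commute)
    finally show ?thesis .
  qed
  have s2: "(\<Sum>p\<in>R. g (snd p)) = int c * (\<Sum>i<n. g i)"
  proof -
    have "(\<Sum>p\<in>R. g (snd p)) = (\<Sum>y<n. g y * int (card {p\<in>R. snd p = y}))"
      using fiber_sum[OF finR _ i2, of g] by simp
    also have "\<dots> = (\<Sum>y<n. g y * int c)"
      by (rule sum.cong) (simp_all add: card_col_fiber cols)
    also have "\<dots> = int c * (\<Sum>i<n. g i)" by (simp add: sum_distrib_left mult.commute)
    finally show ?thesis .
  qed
  have s3: "(\<Sum>p\<in>R. h (L (fst p) (snd p))) = int c * (\<Sum>i<n. h i)"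
  proof -
    have "(\<Sum>p\<in>R. h (L (fst p) (snd p))) = (\<Sum>y<n. h y * int (card {p\<in>R. (\<lambda>p. L (fst p) (snd p)) p = y}))"
      using fiber_sum[OF finR _ i3, of h] by simp
    also have "\<dots> = (\<Sum>y<n. h y * int c)"
    proof (rule sum.cong)
      fix y assume "y \<in> {..<n}"
      then have "card {p\<in>R. L (fst p) (snd p) = y} = c"
        using syms card_sym_fiber[of R L y] by simp
      then show "h y * int (card {p\<in>R. (\<lambda>p. L (fst p) (snd p)) p = y}) = h y * int c" by simp
    qed simp
    also have "\<dots> = int c * (\<Sum>i<n. h i)" by (simp add: sum_distrib_left mult.commute)
    finally show ?thesis .
  qed
  have "(\<Sum>p\<in>R. f (fst p) + g (snd p) + h (L (fst p) (snd p)))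
     = (\<Sum>p\<in>R. f (fst p)) + (\<Sum>p\<in>R. g (snd p)) + (\<Sum>p\<in>R. h (L (fst p) (snd p)))"
    by (simp only: sum.distrib)
  also have "\<dots> = int c * (\<Sum>i<n. f i) + int c * (\<Sum>i<n. g i) + int c * (\<Sum>i<n. h i)"
    by (simp only: s1 s2 s3)
  also have "\<dots> = int c * ((\<Sum>i<n. f i) + (\<Sum>j<n. g j) + (\<Sum>s<n. h s))"
    by (simp only: distrib_left)
  finally show ?thesis .
qed

lemma indiv_intro:
  fixes f g h :: "nat \<Rightarrow> int"
  assumes lat: "latin_square n L" and pl: "is_plex n L k P"
    and cert: "\<And>i j. (i, j) \<in> P \<Longrightarrow> int k dvd (f i + g j + h (L i j))"
    and K: "int k dvd ((\<Sum>i<n. f i) + (\<Sum>j<n. g j) + (\<Sum>s<n. h s) - e)"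
    and e: "e = 1 \<or> e = -1"
  shows "indivisible_plex n L k P"
  unfolding indivisible_plex_def
proof (intro conjI allI impI)
  show "is_plex n L k P" by (rule pl)
  fix c Q assume asm: "0 < c \<and> c < k \<and> Q \<subseteq> P"
  show "\<not> is_plex n L c Q"
  proof
    assume pq: "is_plex n L c Q"
    let ?K = "(\<Sum>i<n. f i) + (\<Sum>j<n. g j) + (\<Sum>s<n. h s)"
    have sum: "(\<Sum>p\<in>Q. f (fst p) + g (snd p) + h (L (fst p) (snd p))) = int c * ?K"
      by (rule cert_sum[OF lat pq])
    have "int k dvd (\<Sum>p\<in>Q. f (fst p) + g (snd p) + h (L (fst p) (snd p)))"
    proof (rule dvd_sum)
      fix p assume "p \<in> Q"
      then have "p \<in> P" using asm by blast
      then show "int k dvd f (fst p) + g (snd p) + h (L (fst p) (snd p))"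
        using cert[of "fst p" "snd p"] by simp
    qed
    then have d1: "int k dvd int c * ?K" using sum by simp
    obtain m where m: "?K - e = int k * m" using K by (elim dvdE)
    have "int c * ?K = int c * e + int k * (int c * m)" using m by (simp add: algebra_simps)
    then have "int k dvd int c * e" using d1
      by (metis dvd_add_left_iff dvd_triv_left)
    then have "int k dvd int c" using e by auto
    then have "k dvd c" by simp
    then show False using asm by (auto dest: dvd_imp_le)
  qed
qed

lemma card_compl_filter:
  assumes "finite A"
  shows "card {x\<in>A. \<not> P x} = card A - card {x\<in>A. P x}"
proof -
  have "{x\<in>A. \<not> P x} = A - {x\<in>A. P x}" by blast
  then show ?thesis using assms by (simp add: card_Diff_subset)
qed

lemma latin_row_unique:
  assumes "latin_square n L" "i < n" "s < n"
  shows "\<exists>!j. j < n \<and> L i j = s"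
proof -
  have "\<forall>i<n. \<forall>s<n. \<exists>!j. j < n \<and> L i j = s"
    using assms(1) unfolding latin_square_def by (elim conjE)
  then show ?thesis using assms(2,3) by simp
qed

lemma plex_intro:
  assumes lat: "latin_square n L"
    and rowc: "\<And>i. i < n \<Longrightarrow> card {j\<in>{..<n}. \<Phi> i j} = k"
    and colc: "\<And>j. j < n \<Longrightarrow> card {i\<in>{..<n}. \<Phi> i j} = k"
    and symc: "\<And>s. s < n \<Longrightarrow> card {i\<in>{..<n}. \<Psi> i s} = k"
    and link: "\<And>i j. i < n \<Longrightarrow> j < n \<Longrightarrow> \<Phi> i j = \<Psi> i (L i j)"
  shows "is_plex n L k {(i, j). i < n \<and> j < n \<and> \<Phi> i j}"
proof -
  let ?P = "{(i, j). i < n \<and> j < n \<and> \<Phi> i j}"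
  have sub: "?P \<subseteq> {0..<n} \<times> {0..<n}" by auto
  have r: "\<And>i. i < n \<Longrightarrow> card {j. (i, j) \<in> ?P} = k"
  proof -
    fix i assume "i < n"
    then have "{j. (i, j) \<in> ?P} = {j\<in>{..<n}. \<Phi> i j}" by auto
    then show "card {j. (i, j) \<in> ?P} = k" using rowc \<open>i < n\<close> by simp
  qed
  have c: "\<And>j. j < n \<Longrightarrow> card {i. (i, j) \<in> ?P} = k"
  proof -
    fix j assume "j < n"
    then have "{i. (i, j) \<in> ?P} = {i\<in>{..<n}. \<Phi> i j}" by auto
    then show "card {i. (i, j) \<in> ?P} = k" using colc \<open>j < n\<close> by simp
  qed
  have s: "\<And>s. s < n \<Longrightarrow> card {(i, j). (i, j) \<in> ?P \<and> L i j = s} = k"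
  proof -
    fix s assume sn: "s < n"
    define J where "J i = (THE j. j < n \<and> L i j = s)" for i
    have J: "\<And>i. i < n \<Longrightarrow> J i < n \<and> L i (J i) = s"
      unfolding J_def by (rule theI') (rule latin_row_unique[OF lat _ sn])
    have Ju: "\<And>i j. i < n \<Longrightarrow> j < n \<Longrightarrow> L i j = s \<Longrightarrow> j = J i"
      using J latin_row_unique[OF lat _ sn] by metis
    have eq: "{(i, j). (i, j) \<in> ?P \<and> L i j = s} = (\<lambda>i. (i, J i)) ` {i\<in>{..<n}. \<Psi> i s}"
    proof (rule set_eqI, rule iffI)
      fix p assume "p \<in> {(i, j). (i, j) \<in> ?P \<and> L i j = s}"
      then obtain i j where p: "p = (i, j)" "i < n" "j < n" "\<Phi> i j" "L i j = s" by auto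
      then have "j = J i" using Ju by blast
      moreover have "\<Psi> i s" using link[of i j] p by simp
      ultimately show "p \<in> (\<lambda>i. (i, J i)) ` {i\<in>{..<n}. \<Psi> i s}" using p by auto
    next
      fix p assume "p \<in> (\<lambda>i. (i, J i)) ` {i\<in>{..<n}. \<Psi> i s}"
      then obtain i where i: "p = (i, J i)" "i < n" "\<Psi> i s" by auto
      have "J i < n" "L i (J i) = s" using J i(2) by auto
      moreover then have "\<Phi> i (J i)" using link[of i "J i"] i by simp
      ultimately show "p \<in> {(i, j). (i, j) \<in> ?P \<and> L i j = s}" using i by auto
    qed
    have "inj_on (\<lambda>i. (i, J i)) {i\<in>{..<n}. \<Psi> i s}" by (auto simp: inj_on_def)
    then show "card {(i, j). (i, j) \<in> ?P \<and> L i j = s} = k"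
      using eq symc[OF sn] by (simp add: card_image)
  qed
  have fin: "finite ?P" using sub finite_subset by blast
  have "card ?P = (\<Sum>i<n. of_nat (card {p\<in>?P. fst p = i}))"
  proof -
    have "card ?P = (\<Sum>p\<in>?P. (1::nat))" by simp
    also have "\<dots> = (\<Sum>y<n. 1 * of_nat (card {p\<in>?P. fst p = y}))"
    proof -
      have im: "fst ` ?P \<subseteq> {..<n}" by auto
      show ?thesis using fiber_sum[OF fin finite_lessThan im, of "\<lambda>_. (1::nat)"] by simp
    qed
    finally show ?thesis by simp
  qed
  also have "\<dots> = (\<Sum>i<n. k)"
  proof (rule sum.cong)
    fix i assume "i \<in> {..<n}"
    then have "card {p\<in>?P. fst p = i} = k" by (subst card_row_fiber) (rule r, simp)
    then show "of_nat (card {p\<in>?P. fst p = i}) = k" by simp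
  qed simp
  finally have "card ?P = k * n" by simp
  then show ?thesis unfolding is_plex_def using sub r c s by blast
qed




lemma mod_cancel: fixes a1 a2 b k :: nat
  assumes "a1 < k" "a2 < k" "(a1 + b) mod k = (a2 + b) mod k" shows "a1 = a2"
proof (cases "a2 \<le> a1")
  case True
  then have "k dvd (a1 + b) - (a2 + b)" using assms(3) mod_eq_dvd_iff_nat[of "a2+b" "a1+b" k] by simp
  then have "k dvd a1 - a2" by simp
  moreover have "a1 - a2 < k" using assms(1) by simp
  ultimately have "a1 - a2 = 0" by (metis dvd_imp_le neq0_conv not_less)
  then show ?thesis using True by simp
next
  case False
  then have "k dvd (a2 + b) - (a1 + b)" using assms(3) mod_eq_dvd_iff_nat[of "a1+b" "a2+b" k] by simp
  then have "k dvd a2 - a1" by simp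
  moreover have "a2 - a1 < k" using assms(2) by simp
  ultimately have "a2 - a1 = 0" by (metis dvd_imp_le neq0_conv not_less)
  then show ?thesis using False by simp
qed

definition Wf :: "nat \<Rightarrow> nat \<Rightarrow> nat \<Rightarrow> bool" where
  "Wf k a b \<longleftrightarrow> odd k \<and> a = 2 \<and> b = 1"

definition Lt :: "nat \<Rightarrow> nat \<Rightarrow> bool \<Rightarrow> nat \<Rightarrow> bool \<Rightarrow> nat" where
  "Lt k a x b y = (if a = 0 \<and> \<not> x \<and> \<not> y then (b + 1) mod k
                   else if a = 1 \<and> \<not> x \<and> \<not> y then b else (a + b) mod k)"

definition Lz :: "nat \<Rightarrow> nat \<Rightarrow> bool \<Rightarrow> nat \<Rightarrow> bool \<Rightarrow> bool" where
  "Lz k a x b y = (if (a = 0 \<or> a = 1) \<and> \<not> x \<and> \<not> y then False else ((x \<noteq> y) \<noteq> Wf k a b))"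

definition enc :: "nat \<Rightarrow> bool \<Rightarrow> nat" where
  "enc t z = 2 * t + (if z then 1 else 0)"

definition LL :: "nat \<Rightarrow> nat \<Rightarrow> nat \<Rightarrow> nat" where
  "LL k i j = enc (Lt k (i div 2) (odd i) (j div 2) (odd j)) (Lz k (i div 2) (odd i) (j div 2) (odd j))"

lemma enc_div [simp]: "enc t z div 2 = t" unfolding enc_def by auto
lemma enc_odd [simp]: "odd (enc t z) = z" unfolding enc_def by auto
lemma enc_eq: "enc t1 z1 = enc t2 z2 \<longleftrightarrow> t1 = t2 \<and> z1 = z2"
  unfolding enc_def by (cases z1; cases z2) presburger+
lemma enc_lt: "t < k \<Longrightarrow> enc t z < 2 * k" unfolding enc_def by auto
lemma dec: "i = enc (i div 2) (odd i)" unfolding enc_def by auto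
lemma dec_eq: "(j1::nat) div 2 = j2 div 2 \<Longrightarrow> odd j1 = odd j2 \<Longrightarrow> j1 = j2"
proof -
  assume a: "j1 div 2 = j2 div 2" "odd j1 = odd j2"
  have "j1 = 2 * (j1 div 2) + j1 mod 2" "j2 = 2 * (j2 div 2) + j2 mod 2" by simp_all
  moreover have "j1 mod 2 = j2 mod 2" using a(2) by (metis odd_iff_mod_2_eq_one mod2_eq_if)
  ultimately show ?thesis using a(1) by simp
qed
lemma dec_lt: "(i::nat) < 2 * k \<Longrightarrow> i div 2 < k" by auto

lemma Lt_lt: "0 < k \<Longrightarrow> b < k \<Longrightarrow> Lt k a x b y < k"
  unfolding Lt_def by auto

lemma row_inj_dec:
  assumes k: "2 \<le> k" and ab: "a < k" "b1 < k" "b2 < k"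
    and t: "Lt k a x b1 y1 = Lt k a x b2 y2" and z: "Lz k a x b1 y1 = Lz k a x b2 y2"
  shows "b1 = b2 \<and> y1 = y2"
proof -
  have sw1: "(a = 0 \<or> a = 1) \<and> \<not> x \<Longrightarrow> \<not> Wf k a b" for b unfolding Wf_def by auto
  show ?thesis
  proof (cases "(a = 0 \<or> a = 1) \<and> \<not> x")
    case True
    show ?thesis
    proof (cases y1; cases y2)
      assume "y1" "y2"
      then have "(a + b1) mod k = (a + b2) mod k" using t True unfolding Lt_def by auto
      then have "b1 = b2" using mod_cancel[of b1 k b2 a] ab by (simp add: add.commute)
      then show ?thesis using \<open>y1\<close> \<open>y2\<close> by simp
    next
      assume "y1" "\<not> y2"
      then show ?thesis using z True sw1 unfolding Lz_def by auto
    next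
      assume "\<not> y1" "y2"
      then show ?thesis using z True sw1 unfolding Lz_def by auto
    next
      assume "\<not> y1" "\<not> y2"
      show ?thesis
      proof (cases "a = 0")
        case True
        then have "(1 + b1) mod k = (1 + b2) mod k" using t \<open>\<not> y1\<close> \<open>\<not> y2\<close> \<open>(a = 0 \<or> a = 1) \<and> \<not> x\<close>
          unfolding Lt_def by (simp add: add.commute)
        then have "b1 = b2" using mod_cancel[of b1 k b2 1] ab by (simp add: add.commute)
        then show ?thesis using \<open>\<not> y1\<close> \<open>\<not> y2\<close> by simp
      next
        case False
        then show ?thesis using t \<open>\<not> y1\<close> \<open>\<not> y2\<close> \<open>(a = 0 \<or> a = 1) \<and> \<not> x\<close>
          unfolding Lt_def by simp
      qed
    qed
  next
    case False
    then have "(a + b1) mod k = (a + b2) mod k" using t unfolding Lt_def by auto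
    then have b: "b1 = b2" using mod_cancel[of b1 k b2 a] ab by (simp add: add.commute)
    then have "y1 = y2" using z False unfolding Lz_def by auto
    then show ?thesis using b by simp
  qed
qed

lemma col_inj_dec:
  assumes k: "2 \<le> k" and ab: "a1 < k" "a2 < k" "b < k"
    and t: "Lt k a1 x1 b y = Lt k a2 x2 b y" and z: "Lz k a1 x1 b y = Lz k a2 x2 b y"
  shows "a1 = a2 \<and> x1 = x2"
proof -
  have W01: "a = 0 \<or> a = 1 \<Longrightarrow> \<not> Wf k a b'" for a b' unfolding Wf_def by auto
  define s1 where "s1 = ((a1 = 0 \<or> a1 = 1) \<and> \<not> x1 \<and> \<not> y)"
  define s2 where "s2 = ((a2 = 0 \<or> a2 = 1) \<and> \<not> x2 \<and> \<not> y)"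
  have e0: "(b + 1) mod k = (1 + b) mod k" by (simp add: add.commute)
  have e1: "b = (0 + b) mod k" using ab by simp
  show ?thesis
  proof (cases s1; cases s2)
    assume "s1" "s2"
    then show ?thesis
    proof (cases "a1 = a2")
      case True then show ?thesis using \<open>s1\<close> \<open>s2\<close> unfolding s1_def s2_def by auto
    next
      case False
      then have "(a1 = 0 \<and> a2 = 1) \<or> (a1 = 1 \<and> a2 = 0)" using \<open>s1\<close> \<open>s2\<close> unfolding s1_def s2_def by auto
      then have "(1 + b) mod k = (0 + b) mod k"
        using t \<open>s1\<close> \<open>s2\<close> ab(3) unfolding s1_def s2_def Lt_def by (auto simp: add.commute)
      then have "(1::nat) = 0" using mod_cancel[of 1 k 0 b] k by simp
      then show ?thesis by simp
    qed
  next
    assume "s1" "\<not> s2"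
    then have z1: "\<not> Lz k a1 x1 b y" unfolding s1_def Lz_def by auto
    have t2: "Lt k a2 x2 b y = (a2 + b) mod k" using \<open>\<not> s2\<close> unfolding s2_def Lt_def by auto
    show ?thesis
    proof (cases "a1 = 0")
      case True
      then have "(1 + b) mod k = (a2 + b) mod k" using t t2 \<open>s1\<close> unfolding s1_def Lt_def by (simp add: add.commute)
      then have "a2 = 1" using mod_cancel[of 1 k a2 b] k ab by simp
      then have "x2" "\<not> y" using \<open>\<not> s2\<close> \<open>s1\<close> unfolding s2_def s1_def by auto
      then have "Lz k a2 x2 b y" using W01[of a2 b] \<open>a2 = 1\<close> unfolding Lz_def by auto
      then show ?thesis using z z1 by simp
    next
      case False
      then have "a1 = 1" using \<open>s1\<close> unfolding s1_def by simp
      then have "(0 + b) mod k = (a2 + b) mod k" using t t2 \<open>s1\<close> ab unfolding s1_def Lt_def by simp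
      then have "a2 = 0" using mod_cancel[of 0 k a2 b] k ab by simp
      then have "x2" "\<not> y" using \<open>\<not> s2\<close> \<open>s1\<close> unfolding s2_def s1_def by auto
      then have "Lz k a2 x2 b y" using W01[of a2 b] \<open>a2 = 0\<close> unfolding Lz_def by auto
      then show ?thesis using z z1 by simp
    qed
  next
    assume "\<not> s1" "s2"
    then have z2: "\<not> Lz k a2 x2 b y" unfolding s2_def Lz_def by auto
    have t1: "Lt k a1 x1 b y = (a1 + b) mod k" using \<open>\<not> s1\<close> unfolding s1_def Lt_def by auto
    show ?thesis
    proof (cases "a2 = 0")
      case True
      then have "(1 + b) mod k = (a1 + b) mod k" using t t1 \<open>s2\<close> unfolding s2_def Lt_def by (simp add: add.commute)
      then have "a1 = 1" using mod_cancel[of 1 k a1 b] k ab by simp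
      then have "x1" "\<not> y" using \<open>\<not> s1\<close> \<open>s2\<close> unfolding s2_def s1_def by auto
      then have "Lz k a1 x1 b y" using W01[of a1 b] \<open>a1 = 1\<close> unfolding Lz_def by auto
      then show ?thesis using z z2 by simp
    next
      case False
      then have "a2 = 1" using \<open>s2\<close> unfolding s2_def by simp
      then have "(0 + b) mod k = (a1 + b) mod k" using t t1 \<open>s2\<close> ab unfolding s2_def Lt_def by simp
      then have "a1 = 0" using mod_cancel[of 0 k a1 b] k ab by simp
      then have "x1" "\<not> y" using \<open>\<not> s1\<close> \<open>s2\<close> unfolding s2_def s1_def by auto
      then have "Lz k a1 x1 b y" using W01[of a1 b] \<open>a1 = 0\<close> unfolding Lz_def by auto
      then show ?thesis using z z2 by simp
    qed
  next
    assume "\<not> s1" "\<not> s2"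
    then have "(a1 + b) mod k = (a2 + b) mod k" using t unfolding s1_def s2_def Lt_def by auto
    then have a: "a1 = a2" using mod_cancel ab by blast
    then have "x1 = x2" using z \<open>\<not> s1\<close> \<open>\<not> s2\<close> unfolding s1_def s2_def Lz_def by auto
    then show ?thesis using a by simp
  qed
qed

lemma latin_intro:
  assumes rng: "\<And>i j. i < n \<Longrightarrow> j < n \<Longrightarrow> L i j < n"
    and rinj: "\<And>i j1 j2. i < n \<Longrightarrow> j1 < n \<Longrightarrow> j2 < n \<Longrightarrow> L i j1 = L i j2 \<Longrightarrow> j1 = j2"
    and cinj: "\<And>j i1 i2. j < n \<Longrightarrow> i1 < n \<Longrightarrow> i2 < n \<Longrightarrow> L i1 j = L i2 j \<Longrightarrow> i1 = i2"
  shows "latin_square n L"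
  unfolding latin_square_def
proof (intro conjI allI impI)
  fix i j assume "i < n" "j < n" then show "L i j < n" by (rule rng)
next
  fix i s assume i: "i < n" and s: "s < n"
  have inj: "inj_on (L i) {..<n}" using rinj[OF i] by (auto simp: inj_on_def)
  have "L i ` {..<n} \<subseteq> {..<n}" using rng[OF i] by auto
  then have "L i ` {..<n} = {..<n}" using endo_inj_surj[OF finite_lessThan _ inj] by simp
  then obtain j where j: "j < n" "L i j = s" using s by (metis imageE lessThan_iff)
  show "\<exists>!j. j < n \<and> L i j = s"
  proof (rule ex1I[of _ j])
    show "j < n \<and> L i j = s" using j by simp
    fix j' assume "j' < n \<and> L i j' = s"
    then show "j' = j" using rinj[OF i, of j' j] j by simp
  qed
next
  fix j s assume j: "j < n" and s: "s < n"
  have inj: "inj_on (\<lambda>i. L i j) {..<n}" using cinj[OF j] by (auto simp: inj_on_def)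
  have "(\<lambda>i. L i j) ` {..<n} \<subseteq> {..<n}" using rng j by auto
  then have "(\<lambda>i. L i j) ` {..<n} = {..<n}" using endo_inj_surj[OF finite_lessThan _ inj] by simp
  then obtain i where i: "i < n" "L i j = s" using s by (metis (no_types, lifting) imageE lessThan_iff)
  show "\<exists>!i. i < n \<and> L i j = s"
  proof (rule ex1I[of _ i])
    show "i < n \<and> L i j = s" using i by simp
    fix i' assume "i' < n \<and> L i' j = s"
    then show "i' = i" using cinj[OF j, of i' i] i by simp
  qed
qed

lemma LL_latin:
  assumes k: "2 \<le> k"
  shows "latin_square (2 * k) (LL k)"
proof (rule latin_intro)
  fix i j assume "i < 2 * k" "j < 2 * k"
  then show "LL k i j < 2 * k" unfolding LL_def using k by (intro enc_lt Lt_lt) auto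
next
  fix i j1 j2 assume a: "i < 2 * k" "j1 < 2 * k" "j2 < 2 * k" "LL k i j1 = LL k i j2"
  then have e: "Lt k (i div 2) (odd i) (j1 div 2) (odd j1) = Lt k (i div 2) (odd i) (j2 div 2) (odd j2)"
     "Lz k (i div 2) (odd i) (j1 div 2) (odd j1) = Lz k (i div 2) (odd i) (j2 div 2) (odd j2)"
    unfolding LL_def enc_eq by auto
  have "j1 div 2 = j2 div 2 \<and> odd j1 = odd j2"
    by (rule row_inj_dec[OF k _ _ _ e]) (use a in auto)
  then show "j1 = j2" using dec_eq by blast
next
  fix j i1 i2 assume a: "j < 2 * k" "i1 < 2 * k" "i2 < 2 * k" "LL k i1 j = LL k i2 j"
  then have e: "Lt k (i1 div 2) (odd i1) (j div 2) (odd j) = Lt k (i2 div 2) (odd i2) (j div 2) (odd j)"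
     "Lz k (i1 div 2) (odd i1) (j div 2) (odd j) = Lz k (i2 div 2) (odd i2) (j div 2) (odd j)"
    unfolding LL_def enc_eq by auto
  have "i1 div 2 = i2 div 2 \<and> odd i1 = odd i2"
    by (rule col_inj_dec[OF k _ _ _ e]) (use a in auto)
  then show "i1 = i2" using dec_eq by blast
qed




definition inPb :: "nat \<Rightarrow> nat \<Rightarrow> bool \<Rightarrow> nat \<Rightarrow> bool \<Rightarrow> bool" where
  "inPb k a x b y = (
     if a = 0 \<and> \<not> x then \<not> y
     else if a = 1 \<and> \<not> x then y
     else if even k then (if a = 0 then \<not> y else if a = 1 then y else y = (x \<noteq> odd a))
     else if 3 \<le> a then y = (x \<noteq> odd a)
     else if a = 0 then (b = 1 \<and> y) \<or> (2 \<le> b \<and> even b)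
     else if a = 1 then b = 0 \<or> (2 \<le> b \<and> y = odd b)
     else if \<not> x then b = 1 \<or> (2 \<le> b \<and> y = even b)
     else b = 0 \<or> (b = 1 \<and> \<not> y) \<or> (2 \<le> b \<and> odd b))"

definition symPb :: "nat \<Rightarrow> nat \<Rightarrow> bool \<Rightarrow> nat \<Rightarrow> bool \<Rightarrow> bool" where
  "symPb k a x t z = (
     if a = 0 \<and> \<not> x then \<not> z
     else if a = 1 \<and> \<not> x then z
     else if even k then (if a = 0 then z else if a = 1 then \<not> z else z = odd a)
     else if 3 \<le> a then z = odd a
     else if a = 0 then (t = 1 \<and> \<not> z) \<or> (2 \<le> t \<and> even t)
     else if a = 1 then t = 1 \<or> (t = 0 \<and> z) \<or> (3 \<le> t \<and> z = odd t)
     else if \<not> x then t = 3 \<or> (t = 1 \<and> z) \<or> (t = 0 \<and> (k = 3 \<or> \<not> z)) \<or> (4 \<le> t \<and> z = even t)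
     else t = 2 \<or> (t = 3 \<and> \<not> z) \<or> (t = 0 \<and> (5 \<le> k \<or> \<not> z)) \<or> (4 \<le> t \<and> odd t))"

lemma mod1: "(b::nat) < k \<Longrightarrow> (b + 1) mod k = (if b + 1 = k then 0 else b + 1)"
  by auto
lemma mod1': "(b::nat) < k \<Longrightarrow> (1 + b) mod k = (if b + 1 = k then 0 else b + 1)"
  by (simp add: add.commute mod1)
lemma mod2: "(b::nat) < k \<Longrightarrow> 2 \<le> k \<Longrightarrow> (2 + b) mod k = (if b + 2 = k then 0 else if b + 1 = k then 1 else b + 2)"
proof -
  assume a: "b < k" "2 \<le> k"
  show ?thesis
  proof (cases "b + 2 < k")
    case True then show ?thesis by auto
  next
    case False
    then have "b + 2 = k \<or> b + 1 = k" using a by auto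
    then show ?thesis
    proof
      assume "b + 2 = k" then show ?thesis by (simp add: add.commute)
    next
      assume h: "b + 1 = k"
      then have "2 + b = k + 1" by simp
      then have "(2 + b) mod k = 1 mod k" by (metis add.commute mod_add_self1)
      then show ?thesis using h a by auto
    qed
  qed
qed
lemma mod0: "(b::nat) < k \<Longrightarrow> (0 + b) mod k = b" by simp

lemma od3: "odd (b::nat) \<Longrightarrow> 2 \<le> b \<Longrightarrow> 3 \<le> b" by presburger
lemma ev4: "even (b::nat) \<Longrightarrow> 3 \<le> b \<Longrightarrow> 4 \<le> b" by presburger
lemma ev2: "even (b::nat) \<Longrightarrow> b \<noteq> 0 \<Longrightarrow> 2 \<le> b" by presburger

lemma link_dec:
  assumes k: "2 \<le> k" and ab: "a < k" "b < k"
  shows "inPb k a x b y = symPb k a x (Lt k a x b y) (Lz k a x b y)"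
proof (cases "even k")
  case True
  then show ?thesis unfolding inPb_def symPb_def Lt_def Lz_def Wf_def by auto
next
  case odd: False
  have k3: "3 \<le> k" using odd k by (metis One_nat_def Suc_1 even_numeral le_eq_less_or_eq linorder_not_less numeral_3_eq_3 less_Suc_eq_le)
  show ?thesis
  proof (cases "3 \<le> a")
    case True
    then show ?thesis using odd unfolding inPb_def symPb_def Lt_def Lz_def Wf_def by auto
  next
    case False
    then have "a = 0 \<or> a = 1 \<or> a = 2" by auto
    then show ?thesis
    proof (elim disjE)
      assume a0: "a = 0"
      show ?thesis
      proof (cases x)
        case False then show ?thesis using a0 unfolding inPb_def symPb_def Lt_def Lz_def Wf_def by auto
      next
        case True then show ?thesis using a0 odd ab unfolding inPb_def symPb_def Lt_def Lz_def Wf_def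
          by auto
      qed
    next
      assume a1: "a = 1"
      show ?thesis
      proof (cases x)
        case False then show ?thesis using a1 unfolding inPb_def symPb_def Lt_def Lz_def Wf_def by auto
      next
        case True
        have "b + 1 = k \<Longrightarrow> even b" using odd by auto
        then show ?thesis using a1 odd ab True mod1'[OF ab(2)] ev2[of b]
          unfolding inPb_def symPb_def Lt_def Lz_def Wf_def by auto
      qed
    next
      assume a2: "a = 2"
      have e1: "b + 1 = k \<Longrightarrow> even b" using odd by auto
      have e2: "b + 2 = k \<Longrightarrow> odd b" using odd by auto
      have e3: "b + 2 = k \<Longrightarrow> (k = 3 \<longleftrightarrow> b = 1)" by auto
      show ?thesis using a2 odd ab mod2[OF ab(2) k] e1 e2 e3 k3 od3[of b] ev2[of b]
        unfolding inPb_def symPb_def Lt_def Lz_def Wf_def by auto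
    qed
  qed
qed




definition ind :: "bool \<Rightarrow> nat" where "ind b = (if b then 1 else 0)"

lemma ind_simps [simp]: "ind True = 1" "ind False = 0" by (simp_all add: ind_def)

lemma pair_sum: "(\<Sum>i<2*(k::nat). (F i::nat)) = (\<Sum>a<k. F (2*a) + F (2*a+1))"
  by (induction k) (simp_all add: add.commute)

lemma pair_card:
  "card {i\<in>{..<2*(k::nat)}. Q (i div 2) (odd i)} = (\<Sum>a<k. ind (Q a False) + ind (Q a True))"
proof -
  have "card {i\<in>{..<2*k}. Q (i div 2) (odd i)} = (\<Sum>i<2*k. ind (Q (i div 2) (odd i)))"
    unfolding ind_def by (rule card_filter_sum) simp
  also have "\<dots> = (\<Sum>a<k. ind (Q ((2*a) div 2) (odd (2*a))) + ind (Q ((2*a+1) div 2) (odd (2*a+1))))"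
    by (rule pair_sum)
  also have "\<dots> = (\<Sum>a<k. ind (Q a False) + ind (Q a True))" by simp
  finally show ?thesis .
qed

lemma sum_ones: "(\<And>b. b < k \<Longrightarrow> G b = (1::nat)) \<Longrightarrow> (\<Sum>b<k. G b) = k"
  by simp

lemma par_sum:
  assumes "\<And>b. 2 \<le> b \<Longrightarrow> b < 2*m+3 \<Longrightarrow> G b = (if even b then A else B)"
  shows "(\<Sum>b<2*m+3. G b) = G 0 + G 1 + (m+1)*A + m*(B::nat)"
  using assms
proof (induction m)
  case 0
  have "(\<Sum>b<3. G b) = G 0 + G 1 + G 2" by (simp add: numeral_3_eq_3 numeral_2_eq_2)
  then show ?case using 0[of 2] by simp
next
  case (Suc m)
  have e: "2 * Suc m + 3 = Suc (Suc (2*m+3))" by simp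
  have "(\<Sum>b<2 * Suc m + 3. G b) = (\<Sum>b<Suc (Suc (2*m+3)). G b)" by (simp only: e)
  also have "\<dots> = (\<Sum>b<2*m+3. G b) + G (2*m+3) + G (Suc (2*m+3))" by (simp only: sum.lessThan_Suc)
  finally have "(\<Sum>b<2 * Suc m + 3. G b) = (\<Sum>b<2*m+3. G b) + G (2*m+3) + G (2*m+4)"
    by (simp add: add.commute)
  moreover have "(\<Sum>b<2*m+3. G b) = G 0 + G 1 + (m+1)*A + m*B" using Suc by simp
  moreover have "G (2*m+3) = B" using Suc.prems[of "2*m+3"] by simp
  moreover have "G (2*m+4) = A" using Suc.prems[of "2*m+4"] by simp
  ultimately show ?case by simp
qed

lemma region_sum:
  "(\<Sum>a\<in>{r..<r+2*m}. (if z = odd a then 2 else 0)) = (2*m::nat)"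
proof (induction m)
  case 0 then show ?case by simp
next
  case (Suc m)
  have e: "r + 2 * Suc m = Suc (Suc (r + 2*m))" by simp
  have "(\<Sum>a\<in>{r..<r + 2 * Suc m}. (if z = odd a then 2 else 0::nat))
      = (\<Sum>a\<in>{r..<r+2*m}. (if z = odd a then 2 else 0)) + (if z = odd (r+2*m) then 2 else 0)
        + (if z = odd (Suc (r+2*m)) then 2 else 0)"
    unfolding e by simp
  then show ?case using Suc by auto
qed

lemma split_sum: "(r::nat) \<le> k \<Longrightarrow> (\<Sum>a<k. G a) = (\<Sum>a<r. G a) + (\<Sum>a\<in>{r..<k}. (G a::nat))"
proof -
  assume "r \<le> k"
  then have "sum G {0..<r} + sum G {r..<k} = sum G {0..<k}" by (intro sum.atLeastLessThan_concat) auto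
  then show ?thesis by (simp add: atLeast0LessThan)
qed




lemma odd_k_form: "odd (k::nat) \<Longrightarrow> 2 \<le> k \<Longrightarrow> \<exists>m. k = 2*m + 3"
  by presburger
lemma even_k_form: "even (k::nat) \<Longrightarrow> 2 \<le> k \<Longrightarrow> \<exists>m. k = 2*m + 2"
  by presburger

lemma row_sum:
  assumes k: "2 \<le> k" and a: "a < k"
  shows "(\<Sum>b<k. ind (inPb k a x b False) + ind (inPb k a x b True)) = k"
proof (cases "even k \<or> 3 \<le> a \<or> (\<not> x \<and> a \<le> 1)")
  case True
  have "\<And>b. b < k \<Longrightarrow> ind (inPb k a x b False) + ind (inPb k a x b True) = 1"
    using True unfolding inPb_def by (auto simp: ind_def)
  then show ?thesis by (rule sum_ones)
next
  case False
  then have odd: "odd k" and a3: "(a = 0 \<and> x) \<or> (a = 1 \<and> x) \<or> (a = 2 \<and> x) \<or> (a = 2 \<and> \<not> x)" by auto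
  obtain m where m: "k = 2*m + 3" using odd_k_form[OF odd k] by blast
  let ?G = "\<lambda>b. ind (inPb k a x b False) + ind (inPb k a x b True)"
  from a3 show ?thesis
  proof (elim disjE conjE)
    assume a0: "a = 0" and x: x
    have "(\<Sum>b<2*m+3. ?G b) = ?G 0 + ?G 1 + (m+1)*2 + m*0"
      by (rule par_sum) (use a0 x odd in \<open>auto simp: inPb_def ind_def\<close>)
    then show ?thesis using a0 x odd m by (simp add: inPb_def)
  next
    assume a1: "a = 1" and x: x
    have "(\<Sum>b<2*m+3. ?G b) = ?G 0 + ?G 1 + (m+1)*1 + m*1"
      by (rule par_sum) (use a1 x odd in \<open>auto simp: inPb_def ind_def\<close>)
    then show ?thesis using a1 x odd m by (simp add: inPb_def)
  next
    assume a2: "a = 2" and x: x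
    have "(\<Sum>b<2*m+3. ?G b) = ?G 0 + ?G 1 + (m+1)*0 + m*2"
      by (rule par_sum) (use a2 x odd in \<open>auto simp: inPb_def ind_def\<close>)
    then show ?thesis using a2 x odd m by (simp add: inPb_def)
  next
    assume a2: "a = 2" and x: "\<not> x"
    have "(\<Sum>b<2*m+3. ?G b) = ?G 0 + ?G 1 + (m+1)*1 + m*1"
      by (rule par_sum) (use a2 x odd in \<open>auto simp: inPb_def ind_def\<close>)
    then show ?thesis using a2 x odd m by (simp add: inPb_def)
  qed
qed

lemma sum_const_ivl: "(\<And>a. a \<in> {r..<k} \<Longrightarrow> G a = (1::nat)) \<Longrightarrow> (\<Sum>a\<in>{r..<k}. G a) = k - r"
  by simp

lemma col_sum:
  assumes k: "2 \<le> k" and b: "b < k"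
  shows "(\<Sum>a<k. ind (inPb k a False b y) + ind (inPb k a True b y)) = k"
proof (cases "even k")
  case True
  let ?G = "\<lambda>a. ind (inPb k a False b y) + ind (inPb k a True b y)"
  have "(\<Sum>a<k. ?G a) = (\<Sum>a<2. ?G a) + (\<Sum>a\<in>{2..<k}. ?G a)" by (rule split_sum[OF k])
  also have "(\<Sum>a\<in>{2..<k}. ?G a) = k - 2"
    by (rule sum_const_ivl) (use True in \<open>auto simp: inPb_def ind_def\<close>)
  also have "(\<Sum>a<2. ?G a) = 2" using True by (simp add: numeral_2_eq_2 inPb_def ind_def)
  finally show ?thesis using k by simp
next
  case False
  let ?G = "\<lambda>a. ind (inPb k a False b y) + ind (inPb k a True b y)"
  obtain m where m: "k = 2*m + 3" using odd_k_form[OF False k] by blast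
  have k3: "3 \<le> k" using m by simp
  have "(\<Sum>a<k. ?G a) = (\<Sum>a<3. ?G a) + (\<Sum>a\<in>{3..<k}. ?G a)" by (rule split_sum[OF k3])
  also have "(\<Sum>a\<in>{3..<k}. ?G a) = k - 3"
    by (rule sum_const_ivl) (use False in \<open>auto simp: inPb_def ind_def\<close>)
  also have "(\<Sum>a<3. ?G a) = 3"
  proof -
    have "(\<Sum>a<3. ?G a) = ?G 0 + ?G 1 + ?G 2" by (simp add: numeral_3_eq_3 numeral_2_eq_2)
    also have "\<dots> = 3"
      using False od3[of b] ev2[of b] by (cases y) (auto simp: inPb_def ind_def)
    finally show ?thesis .
  qed
  finally show ?thesis using k3 by simp
qed

lemma sym_sum:
  assumes k: "2 \<le> k" and t: "t < k"
  shows "(\<Sum>a<k. ind (symPb k a False t z) + ind (symPb k a True t z)) = k"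
proof (cases "even k")
  case True
  let ?G = "\<lambda>a. ind (symPb k a False t z) + ind (symPb k a True t z)"
  obtain m where m: "k = 2*m + 2" using even_k_form[OF True k] by blast
  have "(\<Sum>a<k. ?G a) = (\<Sum>a<2. ?G a) + (\<Sum>a\<in>{2..<k}. ?G a)" by (rule split_sum[OF k])
  also have "(\<Sum>a\<in>{2..<k}. ?G a) = (\<Sum>a\<in>{2..<2+2*m}. (if z = odd a then 2 else 0))"
    by (rule sum.cong) (use True m in \<open>auto simp: symPb_def ind_def\<close>)
  also have "\<dots> = 2*m" by (rule region_sum)
  also have "(\<Sum>a<2. ?G a) = 2" using True by (simp add: numeral_2_eq_2 symPb_def ind_def)
  finally show ?thesis using m by simp
next
  case False
  let ?G = "\<lambda>a. ind (symPb k a False t z) + ind (symPb k a True t z)"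
  obtain m where m: "k = 2*m + 3" using odd_k_form[OF False k] by blast
  have k3: "3 \<le> k" using m by simp
  have "(\<Sum>a<k. ?G a) = (\<Sum>a<3. ?G a) + (\<Sum>a\<in>{3..<k}. ?G a)" by (rule split_sum[OF k3])
  also have "(\<Sum>a\<in>{3..<k}. ?G a) = (\<Sum>a\<in>{3..<3+2*m}. (if z = odd a then 2 else 0))"
    by (rule sum.cong) (use False m in \<open>auto simp: symPb_def ind_def\<close>)
  also have "\<dots> = 2*m" by (rule region_sum)
  also have "(\<Sum>a<3. ?G a) = 3"
  proof -
    have "(\<Sum>a<3. ?G a) = ?G 0 + ?G 1 + ?G 2" by (simp add: numeral_3_eq_3 numeral_2_eq_2)
    also have "\<dots> = 3"
    proof -
      have c: "t = 0 \<or> t = 1 \<or> t = 2 \<or> t = 3 \<or> 4 \<le> t" by auto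
      have k35: "k = 3 \<or> 5 \<le> k" using m by auto
      show ?thesis using c k35 False t ev4[of t] od3[of t]
        by (cases z) (auto simp: symPb_def ind_def)
    qed
    finally show ?thesis .
  qed
  finally show ?thesis using m by simp
qed




definition PhiK :: "nat \<Rightarrow> nat \<Rightarrow> nat \<Rightarrow> bool" where
  "PhiK k i j = inPb k (i div 2) (odd i) (j div 2) (odd j)"
definition PsiK :: "nat \<Rightarrow> nat \<Rightarrow> nat \<Rightarrow> bool" where
  "PsiK k i s = symPb k (i div 2) (odd i) (s div 2) (odd s)"

lemma link_K:
  assumes k: "2 \<le> k" and i: "i < 2*k" and j: "j < 2*k"
  shows "PhiK k i j = PsiK k i (LL k i j)"
  unfolding PhiK_def PsiK_def LL_def enc_div enc_odd
  by (rule link_dec[OF k]) (use i j in auto)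

lemma rowc_K:
  assumes k: "2 \<le> k" and i: "i < 2*k"
  shows "card {j\<in>{..<2*k}. PhiK k i j} = k"
  unfolding PhiK_def
  using pair_card[where k = k and Q = "\<lambda>b y. inPb k (i div 2) (odd i) b y"] row_sum[OF k, of "i div 2" "odd i"] i
  by simp

lemma colc_K:
  assumes k: "2 \<le> k" and j: "j < 2*k"
  shows "card {i\<in>{..<2*k}. PhiK k i j} = k"
  unfolding PhiK_def
  using pair_card[where k = k and Q = "\<lambda>a x. inPb k a x (j div 2) (odd j)"] col_sum[OF k, of "j div 2" "odd j"] j
  by simp

lemma symc_K:
  assumes k: "2 \<le> k" and s: "s < 2*k"
  shows "card {i\<in>{..<2*k}. PsiK k i s} = k"
  unfolding PsiK_def
  using pair_card[where k = k and Q = "\<lambda>a x. symPb k a x (s div 2) (odd s)"] sym_sum[OF k, of "s div 2" "odd s"] s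
  by simp

lemma P_plex:
  assumes k: "2 \<le> k"
  shows "is_plex (2*k) (LL k) k {(i, j). i < 2*k \<and> j < 2*k \<and> PhiK k i j}"
  by (rule plex_intro[OF LL_latin[OF k], where \<Psi> = "PsiK k"])
     (use rowc_K[OF k] colc_K[OF k] symc_K[OF k] link_K[OF k] in auto)

lemma Q_plex:
  assumes k: "2 \<le> k"
  shows "is_plex (2*k) (LL k) k {(i, j). i < 2*k \<and> j < 2*k \<and> \<not> PhiK k i j}"
proof (rule plex_intro[OF LL_latin[OF k], where \<Psi> = "\<lambda>i s. \<not> PsiK k i s"])
  fix i assume "i < 2*k"
  then show "card {j\<in>{..<2*k}. \<not> PhiK k i j} = k"
    using card_compl_filter[of "{..<2*k}" "PhiK k i"] rowc_K[OF k] by simp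
next
  fix j assume "j < 2*k"
  then show "card {i\<in>{..<2*k}. \<not> PhiK k i j} = k"
    using card_compl_filter[of "{..<2*k}" "\<lambda>i. PhiK k i j"] colc_K[OF k] by simp
next
  fix s assume "s < 2*k"
  then show "card {i\<in>{..<2*k}. \<not> PsiK k i s} = k"
    using card_compl_filter[of "{..<2*k}" "\<lambda>i. PsiK k i s"] symc_K[OF k] by simp
next
  fix i j assume "i < 2*k" "j < 2*k"
  then show "(\<not> PhiK k i j) = (\<not> PsiK k i (LL k i j))" using link_K[OF k] by simp
qed

lemma moddvd: "int k dvd int n - int (n mod k)"
proof -
  have "n = k * (n div k) + n mod k" by simp
  then have "int n - int (n mod k) = int k * int (n div k)"
    by (metis add_diff_cancel_right' of_nat_add of_nat_mult)
  then show ?thesis by simp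
qed

lemma cert_P_dec:
  assumes ab: "a < k" "b < k" and p: "inPb k a x b y"
  shows "int k dvd (int a + (if a = 0 \<and> \<not> x then 1 else 0) + int b - int (Lt k a x b y))"
proof (cases "a = 0 \<and> \<not> x")
  case True
  then have "\<not> y" using p unfolding inPb_def by simp
  then have lt: "Lt k a x b y = (b + 1) mod k" using True unfolding Lt_def by simp
  have eq: "int a + (if a = 0 \<and> \<not> x then 1 else 0) + int b - int (Lt k a x b y)
      = int (b + 1) - int ((b + 1) mod k)" using True lt by simp
  show ?thesis unfolding eq by (rule moddvd)
next
  case False
  have "a = 1 \<and> \<not> x \<Longrightarrow> y" using p unfolding inPb_def by simp
  then have "\<not> (a = 1 \<and> \<not> x \<and> \<not> y)" by blast
  then have eq: "int a + (if a = 0 \<and> \<not> x then 1 else 0) + int b - int (Lt k a x b y)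
      = int (a + b) - int ((a + b) mod k)" using False unfolding Lt_def by auto
  show ?thesis unfolding eq by (rule moddvd)
qed

lemma cert_Q_dec:
  assumes ab: "a < k" "b < k" and p: "\<not> inPb k a x b y"
  shows "int k dvd (int a - (if a = 1 \<and> \<not> x then 1 else 0) + int b - int (Lt k a x b y))"
proof (cases "a = 1 \<and> \<not> x")
  case True
  then have "\<not> y" using p unfolding inPb_def by simp
  then have "int a - (if a = 1 \<and> \<not> x then 1 else 0) + int b - int (Lt k a x b y) = 0"
    using True unfolding Lt_def by simp
  then show ?thesis by simp
next
  case False
  have "a = 0 \<and> \<not> x \<Longrightarrow> y" using p unfolding inPb_def by simp
  then have "\<not> (a = 0 \<and> \<not> x \<and> \<not> y)" by blast
  then have eq: "int a - (if a = 1 \<and> \<not> x then 1 else 0) + int b - int (Lt k a x b y)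
      = int (a + b) - int ((a + b) mod k)" using False unfolding Lt_def by auto
  show ?thesis unfolding eq by (rule moddvd)
qed

lemma i0: "((i::nat) = 0) = (i div 2 = 0 \<and> \<not> odd i)" by presburger
lemma i2: "((i::nat) = 2) = (i div 2 = 1 \<and> \<not> odd i)" by presburger

lemma half_sum: "(\<Sum>i<2*(k::nat). i div 2) = k * (k - 1)"
proof (induction k)
  case 0 then show ?case by simp
next
  case (Suc k)
  have "(\<Sum>i<2 * Suc k. i div 2) = (\<Sum>i<Suc (Suc (2*k)). i div 2)" by simp
  also have "\<dots> = (\<Sum>i<2*k. i div 2) + (2*k) div 2 + (Suc (2*k)) div 2" by (simp only: sum.lessThan_Suc)
  also have "\<dots> = k * (k - 1) + k + k" using Suc by simp
  also have "\<dots> = Suc k * (Suc k - 1)" by (cases k) (simp_all add: algebra_simps)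
  finally show ?case .
qed

lemma half_sum_int: "int k dvd (\<Sum>i<2*(k::nat). int (i div 2))"
proof -
  have "(\<Sum>i<2*k. int (i div 2)) = int (\<Sum>i<2*k. i div 2)" by simp
  also have "\<dots> = int k * int (k - 1)" by (simp add: half_sum)
  finally show ?thesis by simp
qed

theorem main:
  fixes k :: nat
  assumes "k \<ge> 2"
  shows "\<exists>L P Q. latin_square (2 * k) L \<and>
           indivisible_plex (2 * k) L k P \<and> indivisible_plex (2 * k) L k Q \<and>
           P \<inter> Q = {}"
proof -
  have k: "2 \<le> k" using assms by simp
  let ?P = "{(i, j). i < 2*k \<and> j < 2*k \<and> PhiK k i j}"
  let ?Q = "{(i, j). i < 2*k \<and> j < 2*k \<and> \<not> PhiK k i j}"
  define f where "f i = int (i div 2) + (if i = 0 then 1 else 0)" for i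
  define f' where "f' i = int (i div 2) - (if i = 2 then 1 else 0)" for i
  define g where "g j = int (j div 2)" for j :: nat
  define h where "h s = - int (s div 2)" for s :: nat
  let ?S = "(\<Sum>i<2*k. int (i div 2))"
  have sf: "(\<Sum>i<2*k. f i) = ?S + 1"
  proof -
    have "(\<Sum>i<2*k. f i) = ?S + (\<Sum>i<2*k. (if i = 0 then 1 else 0))"
      unfolding f_def by (simp add: sum.distrib)
    also have "(\<Sum>i<2*k. (if i = 0 then 1 else (0::int))) = 1" using k by (simp add: sum.delta)
    finally show ?thesis .
  qed
  have sf': "(\<Sum>i<2*k. f' i) = ?S - 1"
  proof -
    have "(\<Sum>i<2*k. f' i) = ?S - (\<Sum>i<2*k. (if i = 2 then 1 else 0))"
      unfolding f'_def by (simp add: sum_subtractf)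
    also have "(\<Sum>i<2*k. (if i = 2 then 1 else (0::int))) = 1" using k by (simp add: sum.delta)
    finally show ?thesis .
  qed
  have sg: "(\<Sum>j<2*k. g j) = ?S" unfolding g_def by simp
  have sh: "(\<Sum>s<2*k. h s) = - ?S" unfolding h_def by (simp add: sum_negf)
  have lat: "latin_square (2*k) (LL k)" by (rule LL_latin[OF k])
  have indP: "indivisible_plex (2*k) (LL k) k ?P"
  proof (rule indiv_intro[OF lat P_plex[OF k], where f = f and g = g and h = h and e = 1])
    fix i j assume "(i, j) \<in> ?P"
    then have ij: "i < 2*k" "j < 2*k" "PhiK k i j" by auto
    have "int k dvd (int (i div 2) + (if i div 2 = 0 \<and> \<not> odd i then 1 else 0) + int (j div 2)
              - int (Lt k (i div 2) (odd i) (j div 2) (odd j)))"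
      by (rule cert_P_dec) (use ij in \<open>auto simp: PhiK_def\<close>)
    then show "int k dvd f i + g j + h (LL k i j)"
      unfolding f_def g_def h_def LL_def enc_div using i0[of i] by simp
  next
    show "int k dvd (\<Sum>i<2*k. f i) + (\<Sum>j<2*k. g j) + (\<Sum>s<2*k. h s) - 1"
      using sf sg sh half_sum_int[of k] by simp
  qed simp
  have indQ: "indivisible_plex (2*k) (LL k) k ?Q"
  proof (rule indiv_intro[OF lat Q_plex[OF k], where f = f' and g = g and h = h and e = "-1"])
    fix i j assume "(i, j) \<in> ?Q"
    then have ij: "i < 2*k" "j < 2*k" "\<not> PhiK k i j" by auto
    have "int k dvd (int (i div 2) - (if i div 2 = 1 \<and> \<not> odd i then 1 else 0) + int (j div 2)
              - int (Lt k (i div 2) (odd i) (j div 2) (odd j)))"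
      by (rule cert_Q_dec) (use ij in \<open>auto simp: PhiK_def\<close>)
    then show "int k dvd f' i + g j + h (LL k i j)"
      unfolding f'_def g_def h_def LL_def enc_div using i2[of i] by simp
  next
    show "int k dvd (\<Sum>i<2*k. f' i) + (\<Sum>j<2*k. g j) + (\<Sum>s<2*k. h s) - - 1"
      using sf' sg sh half_sum_int[of k] by simp
  qed simp
  have disj: "?P \<inter> ?Q = {}" by auto
  show ?thesis using lat indP indQ disj by blast
qed



theorem theorem5p4:
  fixes k :: nat
  assumes "k \<ge> 2"
  shows "\<exists>L P Q. latin_square (2 * k) L \<and>
           indivisible_plex (2 * k) L k P \<and> indivisible_plex (2 * k) L k Q \<and>
           P \<inter> Q = {}"
  using main[OF assms] .

end
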